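(* Let $f:\mathbb{R}^N\to\mathbb{R}^N$ be $C^2$, equivariant with respect to a compact group $\Gamma\subseteq O(N)$ (i.e. $f(\gamma x)=\gamma f(x)$ for all $x,\gamma$), and let $x_\ast$ be a periodic solution of $\dot x=f(x)$ with minimal period $p>0$ which is a discrete wave with $H/K\cong\mathbb{Z}_n$, $n\in\mathbb{N}$. Fix a spatio-temporal symmetry $h\in H$ with time shift $\theta_h$ and a scalar $b\in\mathbb{R}$, and let $U(t,s)$, $t\ge s$, be the family of solution operators on $C([-\theta_h,0],\mathbb{R}^N)$ of the linear DDE $$\dot y(t)=f'(x_\ast(t))y(t)+b\,[y(t)-h\,y(t-\theta_h)].$$ Then for all $t\ge s$, $$hU(t,s)=U(t+\theta_h,s+\theta_h)h\qquad\text{and}\qquad h^nU(t,s)=U(t,s)h^n.$$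
   Context: $K=\{\gamma\in\Gamma\mid\gamma x_\ast(0)=x_\ast(0)\}$, $H=\{\gamma\in\Gamma\mid\gamma\mathcal{O}=\mathcal{O}\}$ where $\mathcal{O}$ is the orbit of $x_\ast$; for $h\in H$, $\theta_h\in[0,p)$ is defined by $hx_\ast(t)=x_\ast(t+\theta_h)$ for all $t$. The solution operator $U(t,s)$ maps $\varphi\in C([-\theta_h,0],\mathbb{R}^N)$ to the history segment $y_t$ (with $y_t(\vartheta)=y(t+\vartheta)$, $\vartheta\in[-\theta_h,0]$) of the solution $y$ of the linear DDE with $y(s+\vartheta)=\varphi(\vartheta)$ for $\vartheta\in[-\theta_h,0]$. A matrix $h$ acts on $C([-\theta_h,0],\mathbb{R}^N)$ pointwise: $(h\varphi)(\vartheta)=h\varphi(\vartheta)$. *)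

theory Defs
  imports "HOL-Analysis.Analysis" "HOL-Algebra.Elementary_Groups"
begin

definition compact_orth_group :: "(real^'n^'n) set \<Rightarrow> bool" where
  "compact_orth_group G \<longleftrightarrow> compact G \<and> mat 1 \<in> G
     \<and> (\<forall>a\<in>G. \<forall>c\<in>G. a ** c \<in> G) \<and> (\<forall>a\<in>G. matrix_inv a \<in> G)
     \<and> (\<forall>a\<in>G. orthogonal_matrix a)"

definition matgrp :: "(real^'n^'n) set \<Rightarrow> (real^'n^'n) monoid" where
  "matgrp S = \<lparr>carrier = S, monoid.mult = (**), one = mat 1\<rparr>"

definition Kgrp :: "(real^'n^'n) set \<Rightarrow> (real \<Rightarrow> real^'n) \<Rightarrow> (real^'n^'n) set" where
  "Kgrp G x = {g \<in> G. g *v x 0 = x 0}"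

definition Hgrp :: "(real^'n^'n) set \<Rightarrow> (real \<Rightarrow> real^'n) \<Rightarrow> (real^'n^'n) set" where
  "Hgrp G x = {g \<in> G. (\<lambda>v. g *v v) ` range x = range x}"

primrec matpow :: "real^'n^'n \<Rightarrow> nat \<Rightarrow> real^'n^'n" where
  "matpow A 0 = mat 1"
| "matpow A (Suc k) = A ** matpow A k"

definition dde_sol :: "(real \<Rightarrow> real^'n \<Rightarrow> real^'n) \<Rightarrow> real^'n^'n \<Rightarrow> real \<Rightarrow> real
    \<Rightarrow> real \<Rightarrow> (real \<Rightarrow> real^'n) \<Rightarrow> (real \<Rightarrow> real^'n) \<Rightarrow> bool" where
  "dde_sol L h b th s phi y \<longleftrightarrow>
     (\<forall>v\<in>{-th..0}. y (s + v) = phi v) \<and> (\<forall>t. t < s - th \<longrightarrow> y t = 0)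
     \<and> continuous_on {s - th..} y
     \<and> (\<forall>t. t > s \<longrightarrow>
          (y has_vector_derivative (L t (y t) + b *\<^sub>R (y t - h *v y (t - th)))) (at t))"

definition solop :: "(real \<Rightarrow> real^'n \<Rightarrow> real^'n) \<Rightarrow> real^'n^'n \<Rightarrow> real \<Rightarrow> real
    \<Rightarrow> real \<Rightarrow> real \<Rightarrow> (real \<Rightarrow> real^'n) \<Rightarrow> real \<Rightarrow> real^'n" where
  "solop L h b th t s phi = (\<lambda>v. (THE y. dde_sol L h b th s phi y) (t + v))"

end

theory Submission
  imports Defs "HOL-Algebra.Multiplicative_Group"
begin

lemma energy_zero:
  fixes d :: "real \<Rightarrow> 'a::real_inner"
  assumes ab: "a \<le> B" and cont: "continuous_on {a..B} d" and d0: "d a = 0"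
    and der: "\<And>t. a < t \<Longrightarrow> t < B \<Longrightarrow> (d has_vector_derivative D t) (at t)"
    and bnd: "\<And>t. a < t \<Longrightarrow> t < B \<Longrightarrow> norm (D t) \<le> C * norm (d t)"
    and t: "t \<in> {a..B}"
  shows "d t = 0"
proof -
  define \<phi> where "\<phi> t = exp (-2*C*t) * (d t \<bullet> d t)" for t
  have le: "\<phi> t \<le> 0"
  proof (cases "a < t")
    case False then have "t = a" using t by auto
    then show ?thesis by (simp add: \<phi>_def d0)
  next
    case True
    have "continuous_on {a..t} \<phi>" unfolding \<phi>_def
      using continuous_on_subset[OF cont, of "{a..t}"] t
      by (intro continuous_intros) auto
    moreover have "\<And>x. a < x \<Longrightarrow> x < t \<Longrightarrow> (\<phi> has_real_derivative
        (exp (-2*C*x) * (-2*C) * (d x \<bullet> d x) + exp (-2*C*x) * (2 * (d x \<bullet> D x)))) (at x)"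
    proof -
      fix x assume x: "a < x" "x < t"
      have dx: "(d has_vector_derivative D x) (at x)" using der x t by auto
      have "((\<lambda>x. d x \<bullet> d x) has_real_derivative (d x \<bullet> D x + D x \<bullet> d x)) (at x)"
        by (rule has_derivative_imp_has_field_derivative[OF has_derivative_inner[OF dx[unfolded has_vector_derivative_def] dx[unfolded has_vector_derivative_def]]])
           (simp add: algebra_simps)
      then have i: "((\<lambda>x. d x \<bullet> d x) has_real_derivative (2 * (d x \<bullet> D x))) (at x)"
        by (simp add: inner_commute)
      have e: "((\<lambda>x. exp (-2*C*x)) has_real_derivative exp (-2*C*x) * (-2*C)) (at x)"
        by (auto intro!: derivative_eq_intros)
      show "(\<phi> has_real_derivative
        (exp (-2*C*x) * (-2*C) * (d x \<bullet> d x) + exp (-2*C*x) * (2 * (d x \<bullet> D x)))) (at x)"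
        unfolding \<phi>_def using DERIV_mult[OF e i] by (simp add: mult.commute)
    qed
    ultimately obtain l z where z: "a < z" "z < t"
      and dz: "(\<phi> has_real_derivative l) (at z)" and eq: "\<phi> t - \<phi> a = (t - a) * l"
      using MVT[OF True, of \<phi>] by (metis real_differentiable_def)
    have l: "l = exp (-2*C*z) * (-2*C) * (d z \<bullet> d z) + exp (-2*C*z) * (2 * (d z \<bullet> D z))"
      using DERIV_unique[OF dz] \<open>\<And>x. a < x \<Longrightarrow> x < t \<Longrightarrow> _\<close> z by blast
    have "d z \<bullet> D z \<le> norm (d z) * norm (D z)" by (rule norm_cauchy_schwarz)
    also have "\<dots> \<le> norm (d z) * (C * norm (d z))"
      using bnd[of z] z t by (intro mult_left_mono) auto
    finally have "d z \<bullet> D z \<le> C * (d z \<bullet> d z)" by (simp add: power2_norm_eq_inner[symmetric] power2_eq_square mult_ac)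
    then have "l \<le> 0" unfolding l
      by (simp add: algebra_simps)
    moreover have "\<phi> a = 0" by (simp add: \<phi>_def d0)
    ultimately show ?thesis using eq True by (simp add: mult_nonneg_nonpos)
  qed
  have "\<phi> t \<ge> 0" unfolding \<phi>_def by simp
  with le have "\<phi> t = 0" by simp
  then show ?thesis unfolding \<phi>_def by simp
qed

lemma energy_zero_back:
  fixes d :: "real \<Rightarrow> 'a::real_inner"
  assumes ab: "B \<le> a" and cont: "continuous_on {B..a} d" and d0: "d a = 0"
    and der: "\<And>t. B < t \<Longrightarrow> t < a \<Longrightarrow> (d has_vector_derivative D t) (at t)"
    and bnd: "\<And>t. B < t \<Longrightarrow> t < a \<Longrightarrow> norm (D t) \<le> C * norm (d t)"
    and t: "t \<in> {B..a}"
  shows "d t = 0"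
proof -
  have c: "continuous_on {- a..- B} (\<lambda>u. d (- u))"
    using cont by (intro continuous_on_compose2[OF cont]) (auto intro: continuous_intros)
  have dv: "((\<lambda>u. d (- u)) has_vector_derivative - D (- u)) (at u)" if u: "- a < u" "u < - B" for u
  proof -
    have "B < - u" "- u < a" using u by auto
    note dd = der[OF this]
    have "((d \<circ> uminus) has_vector_derivative (-1) *\<^sub>R D (- u)) (at u)"
      by (rule vector_diff_chain_at) (auto intro!: derivative_eq_intros dd)
    then show ?thesis by (simp add: o_def)
  qed
  have bd: "norm (- D (- u)) \<le> C * norm (d (- u))" if u: "- a < u" "u < - B" for u
    using bnd[of "-u"] u by simp
  have "(\<lambda>u. d (- u)) (- t) = 0"
    by (rule energy_zero[where D="\<lambda>u. - D (- u)", OF _ c _ dv bd]) (use ab d0 t in auto)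
  then show ?thesis by simp
qed

lemma bounded_lin_const:
  fixes A :: "real \<Rightarrow> ('a::real_normed_vector \<Rightarrow>\<^sub>L 'b::real_normed_vector)"
  assumes "continuous_on S A" "compact S"
  obtains M where "M \<ge> 0" "\<And>t x. t \<in> S \<Longrightarrow> norm (blinfun_apply (A t) x) \<le> M * norm x"
proof -
  have "bounded (A ` S)" by (intro compact_imp_bounded compact_continuous_image assms)
  then obtain M where M: "\<And>t. t \<in> S \<Longrightarrow> norm (A t) \<le> M" by (auto simp: bounded_iff)
  show ?thesis
  proof (rule that[of "max M 0"])
    fix t x assume "t \<in> S"
    have "norm (blinfun_apply (A t) x) \<le> norm (A t) * norm x" by (rule norm_blinfun)
    also have "\<dots> \<le> max M 0 * norm x" using M[OF \<open>t \<in> S\<close>] by (intro mult_right_mono) auto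
    finally show "norm (blinfun_apply (A t) x) \<le> max M 0 * norm x" .
  qed simp
qed

lemma matrix_bound:
  fixes h :: "real^'n^'n"
  obtains Hb where "Hb \<ge> 0" "\<And>x. norm (h *v x) \<le> Hb * norm x"
proof -
  obtain K where "\<And>x. norm (h *v x) \<le> norm x * K"
    using bounded_linear.bounded[OF matrix_vector_mul_bounded_linear[of h]] by blast
  then show ?thesis using that[of "max K 0"]
    by (metis (no_types, opaque_lifting) max.cobounded1 max.cobounded2 mult.commute mult_left_mono norm_ge_zero order_trans)
qed

lemma dde_step:
  fixes A :: "real \<Rightarrow> ((real^'n) \<Rightarrow>\<^sub>L (real^'n))"
  assumes contA: "continuous_on UNIV A" and th: "th \<ge> 0"
    and y1: "dde_sol (\<lambda>r. blinfun_apply (A r)) h b th s phi y1"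
    and y2: "dde_sol (\<lambda>r. blinfun_apply (A r)) h b th s phi y2"
    and as: "a \<ge> s" and z: "\<And>t. t \<le> a \<Longrightarrow> y1 t = y2 t"
    and aB: "a \<le> B" and Bth: "th = 0 \<or> B \<le> a + th"
  shows "\<And>t. t \<le> B \<Longrightarrow> y1 t = y2 t"
proof -
  define d where "d t = y1 t - y2 t" for t
  obtain M where M: "M \<ge> 0" "\<And>t x. t \<in> {a..B} \<Longrightarrow> norm (blinfun_apply (A t) x) \<le> M * norm x"
    using bounded_lin_const[OF continuous_on_subset[OF contA] compact_Icc, of a B] by auto
  obtain Hb where Hb: "Hb \<ge> 0" "\<And>x. norm (h *v x) \<le> Hb * norm x" using matrix_bound by blast
  define D where "D t = blinfun_apply (A t) (d t) + b *\<^sub>R (d t - h *v d (t - th))" for t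
  have dB: "d t = 0" if t: "t \<in> {a..B}" for t
  proof (rule energy_zero[where D=D and C="M + \<bar>b\<bar> * (1 + Hb)", OF aB _ _ _ _ t])
    have c1: "continuous_on {a..B} y1"
      by (rule continuous_on_subset[of "{s-th..}"]) (use y1 as th in \<open>auto simp: dde_sol_def\<close>)
    have c2: "continuous_on {a..B} y2"
      by (rule continuous_on_subset[of "{s-th..}"]) (use y2 as th in \<open>auto simp: dde_sol_def\<close>)
    show "continuous_on {a..B} d" unfolding d_def[abs_def] by (intro continuous_on_diff c1 c2)
    show "d a = 0" using z[of a] by (simp add: d_def)
    fix t assume t: "a < t" "t < B"
    have "(y1 has_vector_derivative (blinfun_apply (A t) (y1 t) + b *\<^sub>R (y1 t - h *v y1 (t - th)))) (at t)"
         "(y2 has_vector_derivative (blinfun_apply (A t) (y2 t) + b *\<^sub>R (y2 t - h *v y2 (t - th)))) (at t)"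
      using y1 y2 t as by (auto simp: dde_sol_def)
    from has_vector_derivative_diff[OF this]
    show "(d has_vector_derivative D t) (at t)" unfolding d_def[abs_def] D_def
      by (simp add: blinfun.diff_right matrix_vector_mult_diff_distrib algebra_simps)
    have dl: "norm (d (t - th)) \<le> norm (d t)"
    proof (cases "th = 0")
      case False then have "t - th \<le> a" using Bth t by auto
      then show ?thesis using z by (simp add: d_def)
    qed simp
    have "norm (D t) \<le> norm (blinfun_apply (A t) (d t)) + \<bar>b\<bar> * (norm (d t) + norm (h *v d (t - th)))"
      unfolding D_def by (smt (verit) norm_scaleR norm_triangle_ineq4 norm_triangle_ineq mult_left_mono abs_ge_zero)
    also have "\<dots> \<le> M * norm (d t) + \<bar>b\<bar> * (norm (d t) + Hb * norm (d t))"
      using M(2)[of t "d t"] t Hb(2)[of "d (t - th)"] dl Hb(1)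
      by (intro add_mono mult_left_mono) (auto intro: order_trans mult_left_mono)
    finally show "norm (D t) \<le> (M + \<bar>b\<bar> * (1 + Hb)) * norm (d t)" by (simp add: algebra_simps)
  qed
  fix t assume "t \<le> B"
  then show "y1 t = y2 t" using dB[of t] z[of t] by (cases "t \<le> a") (auto simp: d_def)
qed

lemma dde_unique:
  fixes A :: "real \<Rightarrow> ((real^'n) \<Rightarrow>\<^sub>L (real^'n))"
  assumes contA: "continuous_on UNIV A" and th: "th \<ge> 0"
    and y1: "dde_sol (\<lambda>r. blinfun_apply (A r)) h b th s phi y1"
    and y2: "dde_sol (\<lambda>r. blinfun_apply (A r)) h b th s phi y2"
  shows "y1 = y2"
proof -
  have base: "y1 t = y2 t" if "t \<le> s" for t
  proof (cases "t < s - th")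
    case True then show ?thesis using y1 y2 by (auto simp: dde_sol_def)
  next
    case False
    then have "t - s \<in> {-th..0}" using that by auto
    then show ?thesis using y1 y2 unfolding dde_sol_def by (metis add_diff_cancel_left' add.commute diff_add_cancel)
  qed
  show ?thesis
  proof
    fix t
    show "y1 t = y2 t"
    proof (cases "th = 0")
      case True
      show ?thesis
        by (rule dde_step[OF contA th y1 y2 order_refl base, of "max s t" t]) (auto simp: True)
    next
      case False
      then have thp: "th > 0" using th by auto
      have ind: "\<forall>u. u \<le> s + real k * th \<longrightarrow> y1 u = y2 u" for k
      proof (induction k)
        case 0 then show ?case using base by simp
      next
        case (Suc k)
        have "y1 u = y2 u" if "u \<le> s + real (Suc k) * th" for u
          by (rule dde_step[where a="s + real k * th" and B="s + real (Suc k) * th", OF contA th y1 y2 _ _ _ _ that]) (use Suc thp in \<open>auto simp: algebra_simps\<close>)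
        then show ?case by blast
      qed
      obtain k where "(t - s) / th \<le> real k" using real_arch_simple by blast
      then have "t \<le> s + real k * th" using thp by (simp add: field_simps)
      then show ?thesis using ind by blast
    qed
  qed
qed

lemma continuous_on_glue_right:
  fixes f :: "real \<Rightarrow> 'b::topological_space"
  assumes "\<And>T. T \<ge> c \<Longrightarrow> continuous_on {a..T} f"
  shows "continuous_on {a..} f"
  unfolding continuous_on_eq_continuous_within
proof
  fix x assume x: "x \<in> {a..}"
  define T where "T = max c (x + 1)"
  have "continuous (at x within {a..T}) f"
    using assms[of T] x by (auto simp: T_def continuous_on_eq_continuous_within)
  moreover have "at x within {a..T} = at x within {a..}"
    by (rule at_within_nhd[where S="{x - 1 <..< x + 1}"]) (auto simp: T_def)
  ultimately show "continuous (at x within {a..}) f" by simp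
qed

definition Gop :: "(real \<Rightarrow> ((real^'n) \<Rightarrow>\<^sub>L (real^'n))) \<Rightarrow> real^'n^'n \<Rightarrow> real \<Rightarrow> real
    \<Rightarrow> (real \<Rightarrow> real^'n) \<Rightarrow> real \<Rightarrow> real^'n" where
  "Gop A h b th y r = blinfun_apply (A r) (y r) + b *\<^sub>R (y r - h *v y (r - th))"

definition Phi :: "(real \<Rightarrow> ((real^'n) \<Rightarrow>\<^sub>L (real^'n))) \<Rightarrow> real^'n^'n \<Rightarrow> real \<Rightarrow> real
    \<Rightarrow> real \<Rightarrow> (real \<Rightarrow> real^'n) \<Rightarrow> (real \<Rightarrow> real^'n) \<Rightarrow> real \<Rightarrow> real^'n" where
  "Phi A h b th s phi y t = (if t < s - th then 0 else if t \<le> s then phi (t - s)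
      else phi 0 + integral {s..t} (Gop A h b th y))"

lemma Gop_cont:
  assumes contA: "continuous_on UNIV A" and th0: "th \<ge> 0"
    and cy: "continuous_on {s - th..T} y"
  shows "continuous_on {s..T} (Gop A h b th y)"
proof -
  have c1: "continuous_on {s..T} y" by (rule continuous_on_subset[OF cy]) (use th0 in auto)
  have c2: "continuous_on {s..T} (\<lambda>r. y (r - th))"
    by (rule continuous_on_compose2[OF cy]) (use th0 in \<open>auto intro: continuous_intros\<close>)
  have c3: "continuous_on {s..T} A" by (rule continuous_on_subset[OF contA]) auto
  have c4: "continuous_on {s..T} (\<lambda>r. h *v y (r - th))"
    by (rule bounded_linear.continuous_on[OF matrix_vector_mul_bounded_linear c2])
  show ?thesis unfolding Gop_def[abs_def]
    by (intro continuous_intros c1 c2 c3 c4)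
qed

lemma Phi_low: "t \<le> s \<Longrightarrow> Phi A h b th s phi y t = Phi A h b th s phi z t"
  by (simp add: Phi_def)

lemma Phi_cont:
  assumes contA: "continuous_on UNIV A" and th0: "th \<ge> 0"
    and cphi: "continuous_on {-th..0} phi"
    and cy: "continuous_on {s - th..} y"
  shows "continuous_on {s - th..} (Phi A h b th s phi y)"
proof (rule continuous_on_glue_right[of s])
  fix T assume T: "s \<le> T"
  have g: "continuous_on {s..T} (Gop A h b th y)"
    by (rule Gop_cont[OF contA th0 continuous_on_subset[OF cy]]) auto
  have i: "continuous_on {s..T} (\<lambda>t. phi 0 + integral {s..t} (Gop A h b th y))"
    by (intro continuous_intros indefinite_integral_continuous_1 integrable_continuous_interval g)
  have p: "continuous_on {s-th..s} (\<lambda>t. phi (t - s))"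
    by (rule continuous_on_compose2[OF cphi]) (auto intro: continuous_intros)
  have "continuous_on ({s-th..s} \<union> {s..T}) (\<lambda>t. if t \<le> s then phi (t - s) else phi 0 + integral {s..t} (Gop A h b th y))"
  proof (rule continuous_on_closed_Un)
    show "continuous_on {s-th..s} (\<lambda>t. if t \<le> s then phi (t - s) else phi 0 + integral {s..t} (Gop A h b th y))"
      using p by (rule continuous_on_eq) auto
    show "continuous_on {s..T} (\<lambda>t. if t \<le> s then phi (t - s) else phi 0 + integral {s..t} (Gop A h b th y))"
      using i by (rule continuous_on_eq) auto
  qed auto
  moreover have "{s-th..s} \<union> {s..T} = {s-th..T}" using th0 T by auto
  ultimately show "continuous_on {s - th..T} (Phi A h b th s phi y)"
    by (rule_tac continuous_on_eq[where f="(\<lambda>t. if t \<le> s then phi (t - s) else phi 0 + integral {s..t} (Gop A h b th y))"])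
       (auto simp: Phi_def)
qed

lemma integral_poly_shift:
  assumes "s \<le> t"
  shows "((\<lambda>r. C * (r - s) ^ j) has_integral C * (t - s) ^ Suc j / Suc j) {s..t}"
proof -
  have aux: "((x - s) ^ j + real j * (x - s) ^ (j - Suc 0) * (x - s)) * C / (1 + real j) = C * (x - s) ^ j" for x
  proof -
    have "(x - s) ^ j + real j * (x - s) ^ (j - Suc 0) * (x - s) = (1 + real j) * (x - s) ^ j"
      by (cases j) (auto simp: algebra_simps)
    then show ?thesis by (simp add: field_simps)
  qed
  have "((\<lambda>r. C * (r - s) ^ j) has_integral
      ((\<lambda>r. C * (r - s) ^ Suc j / Suc j) t - (\<lambda>r. C * (r - s) ^ Suc j / Suc j) s)) {s..t}"
    by (rule fundamental_theorem_of_calculus[OF assms])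
       (auto intro!: derivative_eq_intros simp: has_real_derivative_iff_has_vector_derivative[symmetric] aux)
  then show ?thesis by simp
qed

lemma Phi_step:
  assumes contA: "continuous_on UNIV A" and th0: "th \<ge> 0"
    and cy: "continuous_on {s - th..T} y" and cz: "continuous_on {s - th..T} z"
    and M: "\<And>t x. t \<in> {s..T} \<Longrightarrow> norm (blinfun_apply (A t) x) \<le> M * norm x"
    and Hb: "\<And>x. norm (h *v x) \<le> Hb * norm x" and M0: "M \<ge> 0" and Hb0: "Hb \<ge> 0" and c0: "c \<ge> 0"
    and bnd: "\<And>r. r \<in> {s - th..T} \<Longrightarrow> norm (y r - z r) \<le> c * (max (r - s) 0) ^ j"
    and t: "t \<in> {s - th..T}"
  shows "norm (Phi A h b th s phi y t - Phi A h b th s phi z t)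
           \<le> (M + \<bar>b\<bar> * (1 + Hb)) * c * (max (t - s) 0) ^ Suc j / Suc j"
proof (cases "t \<le> s")
  case True
  then show ?thesis using Phi_low[OF True, of A h b th phi y z] M0 Hb0 c0 by simp
next
  case False
  then have st: "s < t" "t \<le> T" using t by auto
  define K where "K = M + \<bar>b\<bar> * (1 + Hb)"
  have K0: "K \<ge> 0" using M0 Hb0 by (simp add: K_def)
  have gy: "continuous_on {s..t} (Gop A h b th y)"
    by (rule Gop_cont[OF contA th0 continuous_on_subset[OF cy]]) (use st in auto)
  have gz: "continuous_on {s..t} (Gop A h b th z)"
    by (rule Gop_cont[OF contA th0 continuous_on_subset[OF cz]]) (use st in auto)
  have iy: "Gop A h b th y integrable_on {s..t}" by (rule integrable_continuous_interval[OF gy])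
  have iz: "Gop A h b th z integrable_on {s..t}" by (rule integrable_continuous_interval[OF gz])
  have "Phi A h b th s phi y t - Phi A h b th s phi z t
      = integral {s..t} (\<lambda>r. Gop A h b th y r - Gop A h b th z r)"
    using st th0 by (simp add: Phi_def integral_diff[OF iy iz])
  also have "norm \<dots> \<le> integral {s..t} (\<lambda>r. K * c * (r - s) ^ j)"
  proof (rule integral_norm_bound_integral)
    show "(\<lambda>r. Gop A h b th y r - Gop A h b th z r) integrable_on {s..t}"
      by (intro integrable_diff iy iz)
    show "(\<lambda>r. K * c * (r - s) ^ j) integrable_on {s..t}"
      using integral_poly_shift[OF less_imp_le[OF st(1)], of "K * c" j] by (rule has_integral_integrable)
    fix r assume r: "r \<in> {s..t}"
    define d where "d = y r - z r"
    define d' where "d' = y (r - th) - z (r - th)"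
    have "Gop A h b th y r - Gop A h b th z r = blinfun_apply (A r) d + b *\<^sub>R (d - h *v d')"
      by (simp add: Gop_def d_def d'_def blinfun.diff_right matrix_vector_mult_diff_distrib algebra_simps)
    then have "norm (Gop A h b th y r - Gop A h b th z r) \<le> norm (blinfun_apply (A r) d) + \<bar>b\<bar> * (norm d + norm (h *v d'))"
      by (smt (verit) norm_scaleR norm_triangle_ineq4 norm_triangle_ineq mult_left_mono abs_ge_zero)
    also have "\<dots> \<le> M * norm d + \<bar>b\<bar> * (norm d + Hb * norm d')"
      using M[of r d] Hb[of d'] r st by (intro add_mono mult_left_mono) auto
    also have "\<dots> \<le> M * (c * (r - s) ^ j) + \<bar>b\<bar> * (c * (r - s) ^ j + Hb * (c * (r - s) ^ j))"
    proof -
      have nd: "norm d \<le> c * (r - s) ^ j" using bnd[of r] r st th0 by (auto simp: d_def)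
      have "norm d' \<le> c * (max (r - th - s) 0) ^ j" using bnd[of "r - th"] r st th0 by (auto simp: d'_def)
      also have "\<dots> \<le> c * (r - s) ^ j"
        using r th0 c0 by (intro mult_left_mono power_mono) auto
      finally have nd': "norm d' \<le> c * (r - s) ^ j" .
      show ?thesis using nd nd' M0 Hb0
        by (intro add_mono mult_left_mono) auto
    qed
    also have "\<dots> = K * c * (r - s) ^ j" by (simp add: K_def algebra_simps)
    finally show "norm (Gop A h b th y r - Gop A h b th z r) \<le> K * c * (r - s) ^ j" .
  qed
  also have "\<dots> = K * c * (t - s) ^ Suc j / Suc j"
    using integral_poly_shift[OF less_imp_le[OF st(1)], of "K * c" j] by (rule integral_unique)
  finally show ?thesis using st by (simp add: K_def)
qed

lemma Gop_diff_bound: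
  assumes M: "\<And>x. norm (blinfun_apply (A r) x) \<le> M * norm x"
    and Hb: "\<And>x. norm (h *v x) \<le> Hb * norm x"
  shows "norm (Gop A h b th y r - Gop A h b th z r)
     \<le> M * norm (y r - z r) + \<bar>b\<bar> * (norm (y r - z r) + Hb * norm (y (r - th) - z (r - th)))"
proof -
  define d where "d = y r - z r"
  define d' where "d' = y (r - th) - z (r - th)"
  have "Gop A h b th y r - Gop A h b th z r = blinfun_apply (A r) d + b *\<^sub>R (d - h *v d')"
    by (simp add: Gop_def d_def d'_def blinfun.diff_right matrix_vector_mult_diff_distrib algebra_simps)
  then have "norm (Gop A h b th y r - Gop A h b th z r) \<le> norm (blinfun_apply (A r) d) + \<bar>b\<bar> * (norm d + norm (h *v d'))"
    by (smt (verit) norm_scaleR norm_triangle_ineq4 norm_triangle_ineq mult_left_mono abs_ge_zero)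
  also have "\<dots> \<le> M * norm d + \<bar>b\<bar> * (norm d + Hb * norm d')"
    using M[of d] Hb[of d'] by (intro add_mono mult_left_mono) auto
  finally show ?thesis by (simp add: d_def d'_def)
qed

lemma Gop_uniform:
  assumes u: "uniform_limit {s - th..T} f Y sequentially" and th0: "th \<ge> 0"
    and M: "\<And>t x. t \<in> {s..T} \<Longrightarrow> norm (blinfun_apply (A t) x) \<le> M * norm x"
    and Hb: "\<And>x. norm (h *v x) \<le> Hb * norm x" and M0: "M \<ge> 0" and Hb0: "Hb \<ge> 0"
  shows "uniform_limit {s..T} (\<lambda>n. Gop A h b th (f n)) (Gop A h b th Y) sequentially"
proof (rule uniform_limitI)
  fix e :: real assume e: "e > 0"
  define K where "K = M + \<bar>b\<bar> * (1 + Hb)"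
  have K0: "K \<ge> 0" using M0 Hb0 by (simp add: K_def)
  define e' where "e' = e / (K + 1)"
  have e': "e' > 0" using e K0 by (simp add: e'_def)
  have Ke: "K * e' < e" using e K0 by (simp add: e'_def field_simps)
  from uniform_limitD[OF u e']
  show "\<forall>\<^sub>F n in sequentially. \<forall>r\<in>{s..T}. dist (Gop A h b th (f n) r) (Gop A h b th Y r) < e"
  proof eventually_elim
    case (elim n)
    show ?case
    proof
      fix r assume r: "r \<in> {s..T}"
      have d: "norm (f n r - Y r) < e'" using elim r th0 by (auto simp: dist_norm)
      have d': "norm (f n (r - th) - Y (r - th)) < e'" using elim r th0 by (auto simp: dist_norm)
      have "norm (Gop A h b th (f n) r - Gop A h b th Y r)
          \<le> M * norm (f n r - Y r) + \<bar>b\<bar> * (norm (f n r - Y r) + Hb * norm (f n (r - th) - Y (r - th)))"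
        by (rule Gop_diff_bound[where A=A and r=r, OF M[OF r] Hb])
      also have "\<dots> \<le> M * e' + \<bar>b\<bar> * (e' + Hb * e')"
        using d d' M0 Hb0 by (intro add_mono mult_left_mono) auto
      also have "\<dots> = K * e'" by (simp add: K_def algebra_simps)
      finally show "dist (Gop A h b th (f n) r) (Gop A h b th Y r) < e"
        using Ke by (simp add: dist_norm)
    qed
  qed
qed

lemma dde_exists:
  fixes A :: "real \<Rightarrow> ((real^'n) \<Rightarrow>\<^sub>L (real^'n))"
  assumes contA: "continuous_on UNIV A" and th0: "th \<ge> 0"
    and cphi: "continuous_on {-th..0} phi"
  shows "\<exists>y. dde_sol (\<lambda>r. blinfun_apply (A r)) h b th s phi y"
proof -
  define F where "F = Phi A h b th s phi"
  define pic where "pic k = (F ^^ Suc k) (\<lambda>_. 0)" for k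
  have pic_Suc: "pic (Suc k) = F (pic k)" for k by (simp add: pic_def)
  have pic0: "pic 0 = F (\<lambda>_. 0)" by (simp add: pic_def)
  have cont_pic: "continuous_on {s - th..} (pic k)" for k
  proof (induction k)
    case 0 show ?case unfolding pic0 F_def
      by (rule Phi_cont[OF contA th0 cphi]) (auto intro: continuous_intros)
  next
    case (Suc k) show ?case unfolding pic_Suc F_def
      by (rule Phi_cont[OF contA th0 cphi Suc[unfolded F_def]])
  qed
  define w where "w k t = pic (Suc k) t - pic k t" for k t
  have w_low: "w k t = 0" if "t \<le> s" for k t
    using Phi_low[OF that] by (cases k) (simp_all add: w_def pic_Suc pic0 F_def)
  have pic_low: "pic k t = pic 0 t" if "t \<le> s" for k t
    using Phi_low[OF that] by (cases k) (simp_all add: pic_Suc pic0 F_def)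
  obtain P where P0: "P \<ge> 0" and P: "\<And>v. v \<in> {-th..0} \<Longrightarrow> norm (phi v) \<le> P"
  proof -
    have "bounded (phi ` {-th..0})" by (intro compact_imp_bounded compact_continuous_image cphi compact_Icc)
    then obtain B where B: "\<forall>v\<in>{-th..0}. norm (phi v) \<le> B" unfolding bounded_iff by auto
    show ?thesis
    proof (rule that[of "max B 0"])
      fix v assume "v \<in> {-th..0}"
      then show "norm (phi v) \<le> max B 0" using B by force
    qed simp
  qed
  have P_pic0: "norm (pic 0 t) \<le> P" for t
  proof -
    have "0 \<in> {-th..0}" using th0 by auto
    moreover have "Gop A h b th (\<lambda>_. 0) = (\<lambda>_. 0)" by (simp add: Gop_def[abs_def])
    ultimately show ?thesis using P P0
      by (auto simp: pic0 F_def Phi_def)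
  qed
  define Y where "Y t = pic 0 t + (\<Sum>k. w k t)" for t
  have unif: "uniform_limit {s - th..T} pic Y sequentially" if T: "T \<ge> s" for T
  proof -
    obtain M where M0: "M \<ge> 0" and M: "\<And>t x. t \<in> {s..T} \<Longrightarrow> norm (blinfun_apply (A t) x) \<le> M * norm x"
      using bounded_lin_const[OF continuous_on_subset[OF contA] compact_Icc, of s T] by auto
    obtain Hb where Hb0: "Hb \<ge> 0" and Hb: "\<And>x. norm (h *v x) \<le> Hb * norm x" using matrix_bound by blast
    define K where "K = M + \<bar>b\<bar> * (1 + Hb)"
    have K0: "K \<ge> 0" using M0 Hb0 by (simp add: K_def)
    have wb: "\<forall>t\<in>{s - th..T}. norm (w k t) \<le> P * K ^ Suc k * (max (t - s) 0) ^ Suc k / fact (Suc k)" for k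
    proof (induction k)
      case 0
      show ?case
      proof
        fix t assume t: "t \<in> {s - th..T}"
        have "norm (Phi A h b th s phi (pic 0) t - Phi A h b th s phi (\<lambda>_. 0) t)
           \<le> (M + \<bar>b\<bar> * (1 + Hb)) * P * (max (t - s) 0) ^ Suc 0 / Suc 0"
          by (rule Phi_step[OF contA th0 continuous_on_subset[OF cont_pic] _ M Hb M0 Hb0 P0 _ t])
             (use P_pic0 in \<open>auto intro: continuous_intros\<close>)
        then show "norm (w 0 t) \<le> P * K ^ Suc 0 * (max (t - s) 0) ^ Suc 0 / fact (Suc 0)"
          by (simp add: w_def pic_Suc pic0 F_def K_def mult_ac)
      qed
    next
      case (Suc k)
      show ?case
      proof
        fix t assume t: "t \<in> {s - th..T}"
        have c0: "P * K ^ Suc k / fact (Suc k) \<ge> 0" using P0 K0 by simp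
        have "norm (Phi A h b th s phi (pic (Suc k)) t - Phi A h b th s phi (pic k) t)
           \<le> (M + \<bar>b\<bar> * (1 + Hb)) * (P * K ^ Suc k / fact (Suc k)) * (max (t - s) 0) ^ Suc (Suc k) / Suc (Suc k)"
        proof (rule Phi_step[OF contA th0 continuous_on_subset[OF cont_pic] continuous_on_subset[OF cont_pic] M Hb M0 Hb0 c0 _ t])
          fix r assume r: "r \<in> {s - th..T}"
          show "norm (pic (Suc k) r - pic k r) \<le> P * K ^ Suc k / fact (Suc k) * (max (r - s) 0) ^ Suc k"
            using Suc r by (simp add: w_def)
        qed auto
        then show "norm (w (Suc k) t) \<le> P * K ^ Suc (Suc k) * (max (t - s) 0) ^ Suc (Suc k) / fact (Suc (Suc k))"
          by (simp add: w_def pic_Suc F_def K_def field_simps)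
      qed
    qed
    define x where "x = K * (T - s)"
    define Mk where "Mk k = P * (inverse (fact (Suc k)) * x ^ Suc k)" for k
    have se: "summable (\<lambda>n. (\<lambda>n. inverse (fact n) * x ^ n) (Suc n))"
      by (subst summable_Suc_iff) (rule summable_exp)
    have sM: "summable Mk"
      unfolding Mk_def by (intro summable_mult) (use se in simp)
    have wM: "norm (w k t) \<le> Mk k" if t: "t \<in> {s - th..T}" for k t
    proof -
      have "norm (w k t) \<le> P * K ^ Suc k * (max (t - s) 0) ^ Suc k / fact (Suc k)" using wb t by blast
      also have "\<dots> \<le> P * K ^ Suc k * (T - s) ^ Suc k / fact (Suc k)"
        using t T P0 K0 by (intro divide_right_mono mult_left_mono power_mono) auto
      also have "\<dots> = Mk k" by (simp only: Mk_def x_def power_mult_distrib divide_inverse mult_ac)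
      finally show ?thesis .
    qed
    have "uniform_limit {s - th..T} (\<lambda>n t. \<Sum>k<n. w k t) (\<lambda>t. \<Sum>k. w k t) sequentially"
      by (rule Weierstrass_m_test[OF wM sM])
    then have "uniform_limit {s - th..T} (\<lambda>n t. pic 0 t + (\<Sum>k<n. w k t)) (\<lambda>t. pic 0 t + (\<Sum>k. w k t)) sequentially"
      by (intro uniform_limit_add uniform_limit_const)
    moreover have "pic 0 t + (\<Sum>k<n. w k t) = pic n t" for n t
      unfolding w_def by (subst sum_lessThan_telescope) simp
    ultimately show ?thesis unfolding Y_def by simp
  qed
  have contY_T: "continuous_on {s - th..T} Y" if "T \<ge> s" for T
    by (rule uniform_limit_theorem[OF _ unif[OF that]])
       (auto intro!: always_eventually continuous_on_subset[OF cont_pic])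
  have contY: "continuous_on {s - th..} Y"
    by (rule continuous_on_glue_right[of s]) (rule contY_T)
  have Y_low: "Y t = pic 0 t" if "t \<le> s" for t
    using w_low[OF that] by (simp add: Y_def)
  have fix_pt: "Y t = phi 0 + integral {s..t} (Gop A h b th Y)" if t: "t > s" for t
  proof -
    obtain M where M0: "M \<ge> 0" and M: "\<And>r x. r \<in> {s..t} \<Longrightarrow> norm (blinfun_apply (A r) x) \<le> M * norm x"
      using bounded_lin_const[OF continuous_on_subset[OF contA] compact_Icc, of s t] by auto
    obtain Hb where Hb0: "Hb \<ge> 0" and Hb: "\<And>x. norm (h *v x) \<le> Hb * norm x" using matrix_bound by blast
    have u: "uniform_limit {s - th..t} pic Y sequentially" using unif t by simp
    have ug: "uniform_limit {s..t} (\<lambda>n. Gop A h b th (pic n)) (Gop A h b th Y) sequentially"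
      by (rule Gop_uniform[OF u th0 M Hb M0 Hb0])
    have cg: "continuous_on {s..t} (Gop A h b th (pic n))" for n
      by (rule Gop_cont[OF contA th0 continuous_on_subset[OF cont_pic]]) auto
    obtain I J where I: "\<And>n. (Gop A h b th (pic n) has_integral I n) {s..t}"
      and J: "(Gop A h b th Y has_integral J) {s..t}" and IJ: "I \<longlonglongrightarrow> J"
      using uniform_limit_integral[OF ug cg] by auto
    have "(\<lambda>n. pic n t) \<longlonglongrightarrow> Y t"
      using tendsto_uniform_limitI[OF u, of t] t th0 by auto
    from LIMSEQ_Suc[OF this] have "(\<lambda>n. pic (Suc n) t) \<longlonglongrightarrow> Y t" .
    moreover have "pic (Suc n) t = phi 0 + I n" for n
      using t th0 integral_unique[OF I[of n]] by (simp add: pic_Suc F_def Phi_def)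
    ultimately have "(\<lambda>n. phi 0 + I n) \<longlonglongrightarrow> Y t" by simp
    moreover have "(\<lambda>n. phi 0 + I n) \<longlonglongrightarrow> phi 0 + J" by (intro tendsto_intros IJ)
    ultimately have "Y t = phi 0 + J" by (rule LIMSEQ_unique)
    then show ?thesis using integral_unique[OF J] by simp
  qed
  have "dde_sol (\<lambda>r. blinfun_apply (A r)) h b th s phi Y"
    unfolding dde_sol_def
  proof (intro conjI ballI allI impI)
    fix v assume v: "v \<in> {-th..0}"
    show "Y (s + v) = phi v"
      using v Y_low[of "s + v"] by (simp add: pic0 F_def Phi_def)
  next
    fix t assume "t < s - th"
    then show "Y t = 0" using Y_low[of t] th0 by (simp add: pic0 F_def Phi_def)
  next
    show "continuous_on {s - th..} Y" by (rule contY)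
  next
    fix t assume t: "s < t"
    define T where "T = t + 1"
    have cg: "continuous_on {s..T} (Gop A h b th Y)"
      by (rule Gop_cont[OF contA th0 contY_T]) (use t in \<open>auto simp: T_def\<close>)
    have "((\<lambda>u. integral {s..u} (Gop A h b th Y)) has_vector_derivative Gop A h b th Y t) (at t within {s..T})"
      by (rule integral_has_vector_derivative[OF cg]) (use t in \<open>auto simp: T_def\<close>)
    then have "((\<lambda>u. integral {s..u} (Gop A h b th Y)) has_vector_derivative Gop A h b th Y t) (at t within {s<..<T})"
      by (rule has_vector_derivative_within_subset) auto
    then have "((\<lambda>u. integral {s..u} (Gop A h b th Y)) has_vector_derivative Gop A h b th Y t) (at t)"
      by (subst (asm) has_vector_derivative_within_open) (use t in \<open>auto simp: T_def\<close>)
    then have "((\<lambda>u. phi 0 + integral {s..u} (Gop A h b th Y)) has_vector_derivative Gop A h b th Y t) (at t)"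
      by (simp add: has_vector_derivative_add_const add.commute[of "phi 0"])
    then have "(Y has_vector_derivative Gop A h b th Y t) (at t)"
      by (rule has_vector_derivative_transform_within_open[where S="{s<..<T}"])
         (use t fix_pt in \<open>auto simp: T_def\<close>)
    then show "(Y has_vector_derivative blinfun_apply (A t) (Y t) + b *\<^sub>R (Y t - h *v Y (t - th))) (at t)"
      by (simp add: Gop_def)
  qed
  then show ?thesis by blast
qed

lemma deriv_equiv:
  fixes f :: "real^'n \<Rightarrow> real^'n" and Df :: "real^'n \<Rightarrow> ((real^'n) \<Rightarrow>\<^sub>L (real^'n))"
  assumes deriv1: "\<forall>x. (f has_derivative blinfun_apply (Df x)) (at x)"
    and eq: "\<forall>x. f (g *v x) = g *v f x"
  shows "blinfun_apply (Df (g *v x)) (g *v v) = g *v blinfun_apply (Df x) v"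
proof -
  have d1: "((\<lambda>x. f (g *v x)) has_derivative (\<lambda>v. blinfun_apply (Df (g *v x)) (g *v v))) (at x)"
    using has_derivative_compose[OF bounded_linear_imp_has_derivative[OF matrix_vector_mul_bounded_linear[of g]] deriv1[rule_format, of "g *v x"]]
    by (simp add: o_def)
  have d2: "((\<lambda>x. f (g *v x)) has_derivative (\<lambda>v. g *v blinfun_apply (Df x) v)) (at x)"
    unfolding eq[rule_format]
    by (rule bounded_linear.has_derivative[OF matrix_vector_mul_bounded_linear deriv1[rule_format]])
  from has_derivative_unique[OF d1 d2] show ?thesis by metis
qed

lemma shift_vd:
  assumes "(xs has_vector_derivative D) (at (u + a))"
  shows "((\<lambda>u. xs (u + a)) has_vector_derivative D) (at u)"
proof -
  have "((xs \<circ> (\<lambda>u. u + a)) has_vector_derivative 1 *\<^sub>R D) (at u)"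
    by (rule vector_diff_chain_at) (auto intro!: derivative_eq_intros assms)
  then show ?thesis by (simp add: o_def)
qed

lemma orbit_unique:
  fixes f :: "real^'n \<Rightarrow> real^'n" and Df :: "real^'n \<Rightarrow> ((real^'n) \<Rightarrow>\<^sub>L (real^'n))"
    and D2 :: "real^'n \<Rightarrow> ((real^'n) \<Rightarrow>\<^sub>L ((real^'n) \<Rightarrow>\<^sub>L (real^'n)))"
  assumes deriv1: "\<forall>x. (f has_derivative blinfun_apply (Df x)) (at x)"
    and deriv2: "\<forall>x. (Df has_derivative blinfun_apply (D2 x)) (at x)"
    and sol: "\<forall>t. (xs has_vector_derivative f (xs t)) (at t)"
    and eq: "\<forall>x. f (g *v x) = g *v f x"
    and gac: "g *v xs a = xs c"
  shows "g *v xs (t + a) = xs (t + c)"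
proof -
  define z1 where "z1 u = g *v xs (u + a)" for u
  define z2 where "z2 u = xs (u + c)" for u
  define d where "d u = z1 u - z2 u" for u
  define I where "I = {min 0 t .. max 0 t}"
  have cxs: "continuous_on UNIV xs"
    using sol by (metis continuous_at_imp_continuous_on has_vector_derivative_continuous)
  have cz1: "continuous_on I z1" unfolding z1_def
    by (intro continuous_intros bounded_linear.continuous_on[OF matrix_vector_mul_bounded_linear]
        continuous_on_compose2[OF cxs]) auto
  have cz2: "continuous_on I z2" unfolding z2_def
    by (intro continuous_intros continuous_on_compose2[OF cxs]) auto
  have cDf: "continuous_on UNIV Df"
    using deriv2 by (metis continuous_at_imp_continuous_on has_derivative_continuous)
  have "compact (z1 ` I \<union> z2 ` I)" unfolding I_def
    by (intro compact_Un compact_continuous_image cz1[unfolded I_def] cz2[unfolded I_def] compact_Icc)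
  then obtain R where R: "\<And>x. x \<in> z1 ` I \<union> z2 ` I \<Longrightarrow> norm x \<le> R"
    using compact_imp_bounded bounded_iff by metis
  have "compact (Df ` cball 0 R)"
    by (intro compact_continuous_image continuous_on_subset[OF cDf]) auto
  then obtain B where B: "\<And>x. x \<in> cball 0 R \<Longrightarrow> norm (Df x) \<le> B"
    using compact_imp_bounded bounded_iff by (metis imageI)
  have lip: "norm (f x - f y) \<le> B * norm (x - y)" if "x \<in> cball 0 R" "y \<in> cball 0 R" for x y
  proof (rule differentiable_bound[OF convex_cball _ _ that])
    fix x assume "x \<in> cball (0::real^'n) R"
    show "(f has_derivative blinfun_apply (Df x)) (at x within cball 0 R)"
      using deriv1 has_derivative_at_withinI by blast
    show "onorm (blinfun_apply (Df x)) \<le> B" using B[OF \<open>x \<in> _\<close>] by (simp add: norm_blinfun.rep_eq)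
  qed
  define D where "D u = f (z1 u) - f (z2 u)" for u
  have dd: "(d has_vector_derivative D u) (at u)" for u
  proof -
    have "(z1 has_vector_derivative g *v f (xs (u + a))) (at u)" unfolding z1_def
      by (rule bounded_linear.has_vector_derivative[OF matrix_vector_mul_bounded_linear shift_vd]) (use sol in auto)
    moreover have "(z2 has_vector_derivative f (xs (u + c))) (at u)" unfolding z2_def
      by (rule shift_vd) (use sol in auto)
    ultimately show ?thesis unfolding d_def[abs_def] D_def z1_def z2_def
      using has_vector_derivative_diff eq by (metis (no_types))
  qed
  have db: "norm (D u) \<le> B * norm (d u)" if "u \<in> I" for u
    unfolding D_def d_def using R[of "z1 u"] R[of "z2 u"] that by (intro lip) auto
  have cd: "continuous_on I d" unfolding d_def[abs_def] by (intro continuous_on_diff cz1 cz2)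
  have d0: "d 0 = 0" by (simp add: d_def z1_def z2_def gac)
  have "d t = 0"
  proof (cases "t \<ge> 0")
    case True
    then have I: "I = {0..t}" by (simp add: I_def)
    show ?thesis
      by (rule energy_zero[where D=D and C=B, OF True cd[unfolded I] d0 dd]) (use db I True in auto)
  next
    case False
    then have I: "I = {t..0}" by (simp add: I_def)
    show ?thesis
      by (rule energy_zero_back[where D=D and C=B, OF _ cd[unfolded I] d0 dd]) (use db I False in auto)
  qed
  then show ?thesis by (simp add: d_def z1_def z2_def)
qed

lemma orth_inv:
  assumes "orthogonal_matrix (g::real^'n^'n)"
  shows "g ** matrix_inv g = mat 1 \<and> matrix_inv g ** g = mat 1"
  unfolding matrix_inv_def by (rule someI[of _ "transpose g"]) (use assms in \<open>simp add: orthogonal_matrix_def\<close>)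

lemma matgrp_simps [simp]:
  "carrier (matgrp S) = S" "monoid.mult (matgrp S) = (**)" "one (matgrp S) = mat 1"
  by (simp_all add: matgrp_def)

lemma wave_pow:
  fixes f :: "real^'n \<Rightarrow> real^'n"
    and Df :: "real^'n \<Rightarrow> ((real^'n) \<Rightarrow>\<^sub>L (real^'n))"
    and D2 :: "real^'n \<Rightarrow> ((real^'n) \<Rightarrow>\<^sub>L ((real^'n) \<Rightarrow>\<^sub>L (real^'n)))"
    and \<Gamma> :: "(real^'n^'n) set"
    and xs :: "real \<Rightarrow> real^'n"
    and n :: nat and h :: "real^'n^'n"
  assumes grp: "compact_orth_group \<Gamma>"
    and equiv: "\<forall>g\<in>\<Gamma>. \<forall>x. f (g *v x) = g *v f x"
    and deriv1: "\<forall>x. (f has_derivative blinfun_apply (Df x)) (at x)"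
    and deriv2: "\<forall>x. (Df has_derivative blinfun_apply (D2 x)) (at x)"
    and sol: "\<forall>t. (xs has_vector_derivative f (xs t)) (at t)"
    and npos: "n > 0"
    and wave: "(matgrp (Hgrp \<Gamma> xs) Mod Kgrp \<Gamma> xs) \<cong> integer_mod_group n"
    and hH: "h \<in> Hgrp \<Gamma> xs"
  shows "matpow h n \<in> Kgrp \<Gamma> xs"
proof -
  define H where "H = Hgrp \<Gamma> xs"
  define K where "K = Kgrp \<Gamma> xs"
  define G where "G = matgrp H"
  have G1: "mat 1 \<in> \<Gamma>" and Gm: "\<And>a c. a \<in> \<Gamma> \<Longrightarrow> c \<in> \<Gamma> \<Longrightarrow> a ** c \<in> \<Gamma>"
    and Gi: "\<And>a. a \<in> \<Gamma> \<Longrightarrow> matrix_inv a \<in> \<Gamma>" and Go: "\<And>a. a \<in> \<Gamma> \<Longrightarrow> orthogonal_matrix a"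
    using grp by (auto simp: compact_orth_group_def)
  have inv: "\<And>a. a \<in> \<Gamma> \<Longrightarrow> a ** matrix_inv a = mat 1 \<and> matrix_inv a ** a = mat 1"
    using Go orth_inv by blast
  have fixK: "g *v xs t = xs t" if "g \<in> K" for g t
    using orbit_unique[OF deriv1 deriv2 sol, of g 0 0 t] that equiv by (auto simp: K_def Kgrp_def)
  have Hmem: "g \<in> H \<longleftrightarrow> g \<in> \<Gamma> \<and> (\<lambda>v. g *v v) ` range xs = range xs" for g
    by (simp add: H_def Hgrp_def)
  have Hm: "a ** c \<in> H" if "a \<in> H" "c \<in> H" for a c
  proof -
    have "(\<lambda>v. (a ** c) *v v) ` range xs = (\<lambda>v. a *v v) ` ((\<lambda>v. c *v v) ` range xs)"
      by (auto simp: image_image matrix_vector_mul_assoc[symmetric])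
    then show ?thesis using that Gm by (simp add: Hmem)
  qed
  have H1: "mat 1 \<in> H" using G1 by (simp add: Hmem)
  have Hi: "matrix_inv a \<in> H" if "a \<in> H" for a
  proof -
    have a: "a \<in> \<Gamma>" "(\<lambda>v. a *v v) ` range xs = range xs" using that by (auto simp: Hmem)
    have ia: "matrix_inv a *v (a *v v) = v" "a *v (matrix_inv a *v v) = v" for v
      using inv[OF a(1)] by (simp_all add: matrix_vector_mul_assoc)
    have "(\<lambda>v. matrix_inv a *v v) ` range xs = range xs"
    proof
      show "(\<lambda>v. matrix_inv a *v v) ` range xs \<subseteq> range xs"
      proof
        fix u assume "u \<in> (\<lambda>v. matrix_inv a *v v) ` range xs"
        then obtain v where v: "v \<in> range xs" "u = matrix_inv a *v v" by auto
        then have "v \<in> (\<lambda>v. a *v v) ` range xs" using a(2) by simp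
        then obtain w where "w \<in> range xs" "v = a *v w" by auto
        then show "u \<in> range xs" using v ia by simp
      qed
      show "range xs \<subseteq> (\<lambda>v. matrix_inv a *v v) ` range xs"
      proof
        fix u assume u: "u \<in> range xs"
        then have "a *v u \<in> range xs" using a(2) by blast
        moreover have "u = matrix_inv a *v (a *v u)" using ia by simp
        ultimately show "u \<in> (\<lambda>v. matrix_inv a *v v) ` range xs" by blast
      qed
    qed
    then show ?thesis using Gi a by (simp add: Hmem)
  qed
  have grpG: "group G"
  proof (rule groupI)
    fix x assume x: "x \<in> carrier G"
    have xH: "x \<in> H" using x by (simp add: G_def)
    have "matrix_inv x \<in> H" "matrix_inv x ** x = mat 1" using Hi[OF xH] inv xH Hmem by auto
    then show "\<exists>y\<in>carrier G. y \<otimes>\<^bsub>G\<^esub> x = \<one>\<^bsub>G\<^esub>"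
      by (auto simp: G_def)
  qed (auto simp: G_def Hm H1 matrix_mul_assoc)
  have invG: "inv\<^bsub>G\<^esub> a = matrix_inv a" if "a \<in> H" for a
    using group.inv_equality[OF grpG, of "matrix_inv a" a] that Hi inv Hmem by (auto simp: G_def)
  have KH: "K \<subseteq> H"
  proof
    fix k assume k: "k \<in> K"
    have "(\<lambda>v. k *v v) ` range xs = range xs" using fixK[OF k] by (auto simp: image_image)
    then show "k \<in> H" using k by (simp add: Hmem K_def Kgrp_def)
  qed
  have subK: "subgroup K G"
  proof
    show "K \<subseteq> carrier G" using KH by (simp add: G_def)
    fix x y assume x: "x \<in> K" and y: "y \<in> K"
    show "x \<otimes>\<^bsub>G\<^esub> y \<in> K" using x y Gm
      by (auto simp: G_def K_def Kgrp_def matrix_vector_mul_assoc[symmetric])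
  next
    show "\<one>\<^bsub>G\<^esub> \<in> K" using G1 by (simp add: G_def K_def Kgrp_def)
  next
    fix x assume x: "x \<in> K"
    then have xG: "x \<in> \<Gamma>" "x *v xs 0 = xs 0" by (auto simp: K_def Kgrp_def)
    have "matrix_inv x *v xs 0 = matrix_inv x *v (x *v xs 0)" using xG by simp
    also have "\<dots> = xs 0" using inv[OF xG(1)] by (simp add: matrix_vector_mul_assoc)
    finally show "inv\<^bsub>G\<^esub> x \<in> K" using invG[of x] x KH Gi xG by (auto simp: K_def Kgrp_def)
  qed
  have normK: "normal K G"
  proof (subst group.normal_inv_iff[OF grpG], intro conjI subK ballI)
    fix x k assume x: "x \<in> carrier G" and k: "k \<in> K"
    have xH: "x \<in> H" using x by (simp add: G_def)
    have xG: "x \<in> \<Gamma>" "(\<lambda>v. x *v v) ` range xs = range xs" using xH by (auto simp: Hmem)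
    have xiH: "matrix_inv x \<in> H" by (rule Hi[OF xH])
    have "matrix_inv x *v xs 0 \<in> range xs"
      using xiH by (auto simp: Hmem)
    then obtain \<tau> where \<tau>: "matrix_inv x *v xs 0 = xs \<tau>" by auto
    have "(x ** k ** matrix_inv x) *v xs 0 = x *v (k *v (matrix_inv x *v xs 0))"
      by (simp add: matrix_vector_mul_assoc matrix_mul_assoc)
    also have "\<dots> = x *v (matrix_inv x *v xs 0)" using \<tau> fixK[OF k] by simp
    also have "\<dots> = xs 0" using inv[OF xG(1)] by (simp add: matrix_vector_mul_assoc)
    finally have "(x ** k ** matrix_inv x) *v xs 0 = xs 0" .
    moreover have "x ** k ** matrix_inv x \<in> \<Gamma>" using xG k Gm Gi by (auto simp: K_def Kgrp_def)
    ultimately show "x \<otimes>\<^bsub>G\<^esub> k \<otimes>\<^bsub>G\<^esub> inv\<^bsub>G\<^esub> x \<in> K"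
      using invG[OF xH] by (simp add: G_def K_def Kgrp_def)
  qed
  have grpQ: "group (G Mod K)" by (rule normal.factorgroup_is_group[OF normK])
  have card: "order (G Mod K) = n"
    using iso_same_card[OF wave[folded H_def K_def G_def]] npos
    by (simp add: order_def carrier_integer_mod_group)
  have hG: "h \<in> carrier G" using hH by (simp add: G_def H_def)
  have X: "K #>\<^bsub>G\<^esub> h \<in> carrier (G Mod K)"
    using hG by (simp add: carrier_FactGroup)
  have "(K #>\<^bsub>G\<^esub> h) [^]\<^bsub>G Mod K\<^esub> n = \<one>\<^bsub>G Mod K\<^esub>"
    using group.pow_order_eq_1[OF grpQ X] card by simp
  then have "K #>\<^bsub>G\<^esub> (h [^]\<^bsub>G\<^esub> n) = K"
    using normal.FactGroup_pow[OF normK hG, of n] by simp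
  moreover have "h [^]\<^bsub>G\<^esub> n \<in> K #>\<^bsub>G\<^esub> (h [^]\<^bsub>G\<^esub> n)"
    by (rule group.rcos_self[OF grpG monoid.nat_pow_closed[OF group.is_monoid[OF grpG] hG] subK])
  ultimately have "h [^]\<^bsub>G\<^esub> n \<in> K" by simp
  moreover have "h [^]\<^bsub>G\<^esub> k = matpow h k" for k
  proof (induction k)
    case 0 then show ?case by (simp add: G_def)
  next
    case (Suc k)
    then show ?case using monoid.nat_pow_Suc2[OF group.is_monoid[OF grpG] hG, of k] by (simp add: G_def)
  qed
  ultimately show ?thesis by (simp add: K_def)
qed

theorem lemma3p1:
  fixes f :: "real^'n \<Rightarrow> real^'n"
    and Df :: "real^'n \<Rightarrow> ((real^'n) \<Rightarrow>\<^sub>L (real^'n))"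
    and D2 :: "real^'n \<Rightarrow> ((real^'n) \<Rightarrow>\<^sub>L ((real^'n) \<Rightarrow>\<^sub>L (real^'n)))"
    and \<Gamma> :: "(real^'n^'n) set"
    and xs :: "real \<Rightarrow> real^'n"
    and p th b :: real and n :: nat and h :: "real^'n^'n"
  assumes grp: "compact_orth_group \<Gamma>"
    and equiv: "\<forall>g\<in>\<Gamma>. \<forall>x. f (g *v x) = g *v f x"
    and deriv1: "\<forall>x. (f has_derivative blinfun_apply (Df x)) (at x)"
    and deriv2: "\<forall>x. (Df has_derivative blinfun_apply (D2 x)) (at x)"
    and cont2: "continuous_on UNIV D2"
    and sol: "\<forall>t. (xs has_vector_derivative f (xs t)) (at t)"
    and pper: "p > 0" "\<forall>t. xs (t + p) = xs t"
    and pmin: "\<forall>q. 0 < q \<and> q < p \<longrightarrow> (\<exists>t. xs (t + q) \<noteq> xs t)"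
    and npos: "n > 0"
    and wave: "(matgrp (Hgrp \<Gamma> xs) Mod Kgrp \<Gamma> xs) \<cong> integer_mod_group n"
    and hH: "h \<in> Hgrp \<Gamma> xs"
    and thrange: "0 \<le> th" "th < p"
    and thshift: "\<forall>t. h *v xs t = xs (t + th)"
  shows "\<forall>t s. s \<le> t \<longrightarrow> (\<forall>phi. continuous_on {-th..0} phi \<longrightarrow>
           (\<forall>v\<in>{-th..0}.
              h *v solop (\<lambda>r. blinfun_apply (Df (xs r))) h b th t s phi v
              = solop (\<lambda>r. blinfun_apply (Df (xs r))) h b th (t + th) (s + th)
                  (\<lambda>u. h *v phi u) v)
         \<and> (\<forall>v\<in>{-th..0}.
              matpow h n *v solop (\<lambda>r. blinfun_apply (Df (xs r))) h b th t s phi v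
              = solop (\<lambda>r. blinfun_apply (Df (xs r))) h b th t s
                  (\<lambda>u. matpow h n *v phi u) v))"
proof -
  define A where "A r = Df (xs r)" for r
  have Gm: "\<And>a c. a \<in> \<Gamma> \<Longrightarrow> c \<in> \<Gamma> \<Longrightarrow> a ** c \<in> \<Gamma>"
    using grp by (auto simp: compact_orth_group_def)
  have hG: "h \<in> \<Gamma>" using hH by (simp add: Hgrp_def)
  have th0: "th \<ge> 0" using thrange by simp
  have cxs: "continuous_on UNIV xs"
    using sol by (metis continuous_at_imp_continuous_on has_vector_derivative_continuous)
  have cDf: "continuous_on UNIV Df"
    using deriv2 by (metis continuous_at_imp_continuous_on has_derivative_continuous)
  have contA: "continuous_on UNIV A" unfolding A_def[abs_def]
    by (rule continuous_on_compose2[OF cDf cxs]) auto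
  have hnK: "matpow h n \<in> Kgrp \<Gamma> xs"
    by (rule wave_pow[OF grp equiv deriv1 deriv2 sol npos wave hH])
  have hnG: "matpow h n \<in> \<Gamma>" using hnK by (simp add: Kgrp_def)
  have hnfix: "matpow h n *v xs t = xs t" for t
    using orbit_unique[OF deriv1 deriv2 sol, of "matpow h n" 0 0 t] hnK hnG equiv by (auto simp: Kgrp_def)
  have hcomm: "matpow h k ** h = h ** matpow h k" for k
  proof (induction k)
    case (Suc k)
    have "matpow h (Suc k) ** h = h ** (matpow h k ** h)" by (simp add: matrix_mul_assoc)
    also have "\<dots> = h ** matpow h (Suc k)" using Suc by simp
    finally show ?case .
  qed simp
  have hcommv: "matpow h n *v (h *v v) = h *v (matpow h n *v v)" for v
    by (simp add: matrix_vector_mul_assoc hcomm)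
  have dA_h: "h *v blinfun_apply (A (t - th)) w = blinfun_apply (A t) (h *v w)" for t w
    using deriv_equiv[OF deriv1, of h "xs (t - th)" w] equiv hG thshift[rule_format, of "t - th"]
    by (simp add: A_def)
  have dA_hn: "matpow h n *v blinfun_apply (A t) w = blinfun_apply (A t) (matpow h n *v w)" for t w
    using deriv_equiv[OF deriv1, of "matpow h n" "xs t" w] equiv hnG hnfix[of t]
    by (simp add: A_def)
  have ex1: "\<exists>!y. dde_sol (\<lambda>r. blinfun_apply (A r)) h b th s phi y"
    if "continuous_on {-th..0} phi" for s phi
    using dde_exists[OF contA th0 that] dde_unique[OF contA th0] by blast
  have L: "(\<lambda>r. blinfun_apply (Df (xs r))) = (\<lambda>r. blinfun_apply (A r))" by (simp add: A_def)
  show ?thesis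
  proof (intro allI impI conjI ballI)
    fix t s :: real and phi :: "real \<Rightarrow> real^'n" and v :: real
    assume cphi: "continuous_on {-th..0} phi"
    define y where "y = (THE y. dde_sol (\<lambda>r. blinfun_apply (A r)) h b th s phi y)"
    have y: "dde_sol (\<lambda>r. blinfun_apply (A r)) h b th s phi y"
      unfolding y_def by (rule theI'[OF ex1[OF cphi]])
    have cy: "continuous_on {s - th..} y" using y by (simp add: dde_sol_def)
    define z where "z u = h *v y (u - th)" for u
    have cphi1: "continuous_on {-th..0} (\<lambda>u. h *v phi u)"
      by (rule bounded_linear.continuous_on[OF matrix_vector_mul_bounded_linear cphi])
    have z: "dde_sol (\<lambda>r. blinfun_apply (A r)) h b th (s + th) (\<lambda>u. h *v phi u) z"
      unfolding dde_sol_def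
    proof (intro conjI ballI allI impI)
      fix v assume v: "v \<in> {-th..0}"
      show "z (s + th + v) = h *v phi v"
      proof -
        have "y (s + v) = phi v" using y v by (simp add: dde_sol_def)
        then show ?thesis by (simp add: z_def)
      qed
    next
      fix u assume "u < s + th - th"
      then show "z u = 0" using y by (simp add: z_def dde_sol_def)
    next
      show "continuous_on {s + th - th..} z" unfolding z_def
        by (rule bounded_linear.continuous_on[OF matrix_vector_mul_bounded_linear],
            rule continuous_on_compose2[OF cy]) (auto intro: continuous_intros)
    next
      fix u assume u: "s + th < u"
      have "s < u - th" using u by simp
      then have d: "(y has_vector_derivative blinfun_apply (A (u - th)) (y (u - th)) + b *\<^sub>R (y (u - th) - h *v y (u - th - th))) (at (u - th))"
        using y unfolding dde_sol_def by blast
      have "(y has_vector_derivative blinfun_apply (A (u - th)) (y (u - th)) + b *\<^sub>R (y (u - th) - h *v y (u - th - th))) (at (u + - th))"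
        using d by simp
      from bounded_linear.has_vector_derivative[OF matrix_vector_mul_bounded_linear shift_vd[OF this], of h]
      show "(z has_vector_derivative blinfun_apply (A u) (z u) + b *\<^sub>R (z u - h *v z (u - th))) (at u)"
        unfolding z_def[abs_def]
        by (simp add: dA_h matrix_vector_mult_diff_distrib matrix_vector_mult_scaleR matrix_vector_right_distrib)
    qed
    have zthe: "(THE y. dde_sol (\<lambda>r. blinfun_apply (A r)) h b th (s + th) (\<lambda>u. h *v phi u) y) = z"
      by (rule the_equality) (rule z, erule dde_unique[OF contA th0 _ z])
    show "h *v solop (\<lambda>r. blinfun_apply (Df (xs r))) h b th t s phi v =
          solop (\<lambda>r. blinfun_apply (Df (xs r))) h b th (t + th) (s + th) (\<lambda>u. h *v phi u) v"
      unfolding solop_def L zthe y_def[symmetric] by (simp add: z_def)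
  next
    fix t s :: real and phi :: "real \<Rightarrow> real^'n" and v :: real
    assume cphi: "continuous_on {-th..0} phi"
    define y where "y = (THE y. dde_sol (\<lambda>r. blinfun_apply (A r)) h b th s phi y)"
    have y: "dde_sol (\<lambda>r. blinfun_apply (A r)) h b th s phi y"
      unfolding y_def by (rule theI'[OF ex1[OF cphi]])
    have cy: "continuous_on {s - th..} y" using y by (simp add: dde_sol_def)
    define z where "z u = matpow h n *v y u" for u
    have cphi1: "continuous_on {-th..0} (\<lambda>u. matpow h n *v phi u)"
      by (rule bounded_linear.continuous_on[OF matrix_vector_mul_bounded_linear cphi])
    have z: "dde_sol (\<lambda>r. blinfun_apply (A r)) h b th s (\<lambda>u. matpow h n *v phi u) z"
      unfolding dde_sol_def
    proof (intro conjI ballI allI impI)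
      fix v assume v: "v \<in> {-th..0}"
      show "z (s + v) = matpow h n *v phi v"
        using y v by (simp add: z_def dde_sol_def)
    next
      fix u assume "u < s - th"
      then show "z u = 0" using y by (simp add: z_def dde_sol_def)
    next
      show "continuous_on {s - th..} z" unfolding z_def
        by (rule bounded_linear.continuous_on[OF matrix_vector_mul_bounded_linear cy])
    next
      fix u assume u: "s < u"
      have "(y has_vector_derivative blinfun_apply (A u) (y u) + b *\<^sub>R (y u - h *v y (u - th))) (at u)"
        using y u by (simp add: dde_sol_def)
      from bounded_linear.has_vector_derivative[OF matrix_vector_mul_bounded_linear this, of "matpow h n"]
      show "(z has_vector_derivative blinfun_apply (A u) (z u) + b *\<^sub>R (z u - h *v z (u - th))) (at u)"
        unfolding z_def[abs_def]
        by (simp add: dA_hn hcommv matrix_vector_mult_diff_distrib matrix_vector_mult_scaleR matrix_vector_right_distrib)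
    qed
    have zthe: "(THE y. dde_sol (\<lambda>r. blinfun_apply (A r)) h b th s (\<lambda>u. matpow h n *v phi u) y) = z"
      by (rule the_equality) (rule z, erule dde_unique[OF contA th0 _ z])
    show "matpow h n *v solop (\<lambda>r. blinfun_apply (Df (xs r))) h b th t s phi v =
          solop (\<lambda>r. blinfun_apply (Df (xs r))) h b th t s (\<lambda>u. matpow h n *v phi u) v"
      unfolding solop_def L zthe y_def[symmetric] by (simp add: z_def)
  qed
qed

end
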